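(* Let $q\equiv 1\pmod 4$ be a prime power. Then: (1) $SP_q$ has properties $P(1,\frac{q-1}{2})$ and $P(2,\frac{q-5}{4})$; (2) $Tr(SP_q)$ has properties $P(1,q)$, $P(2,\frac{q-1}{2})$ and $P(3,\frac{q-5}{4})$; (3) $AT(SP_q)$ has properties $P(1,q-1)$, $P(2,\frac{q-3}{2})$ and $P(3,\max(0,\frac{q-9}{4}))$.
   Context: A signified graph is a simple graph with each edge labelled positive or negative. For $x\in\mathbb{F}_q^*$ let $\mathrm{sq}(x)=+1$ if $x$ is a square and $-1$ otherwise. $SP_q$ is the complete graph on $\mathbb{F}_q$ where $xy$ is negative iff $\mathrm{sq}(y-x)=-1$. For a signified graph $(H,\Lambda)$, $AT(H,\Lambda)$ has vertex set $\{u_0,u_1:u\in V(H)\}$; for every edge $uv$ of $H$ it has edges $u_0v_0,u_1v_1$ with the sign of $uv$ and $u_0v_1,u_1v_0$ with the opposite sign; no other edges. $Tr(SP_q)=AT(SP_q^+)$ where $SP_q^+$ is $SP_q$ plus a vertex $\infty$ joined positively to all vertices; explicitly its vertices are $u_i$, $u\in\mathbb{F}_q\cup\{\infty\}$, $i\in\{0,1\}$, with $u_iv_j$ ($u\ne v\in\mathbb{F}_q$) an edge of sign $\mathrm{sq}(u-v)(-1)^{i+j}$, $\infty_iv_j$ an edge of sign $(-1)^{i+j}$, and no other edges. A signed vector of size $k$ is an element of $\{+1,-1\}^k$. For a sequence $X=(v_1,\dots,v_k)$ of $k$ distinct pairwise adjacent vertices and a signed vector $\alpha$, a vertex $u$ is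 an $\alpha$-successor of $X$ if $uv_i$ is an edge of sign $\alpha_i$ for all $i$. A signified graph has property $P(k,l)$ if every sequence of $k$ distinct pairwise adjacent vertices has at least $l$ $\alpha$-successors for every signed vector $\alpha$ of size $k$. *)

theory Defs
  imports Main
begin

text \<open>A signified graph on the vertex type 'v is a function G :: 'v => 'v => int option:
  G u v = None means uv is not an edge, G u v = Some s means uv is an edge of sign s (s = 1 or -1).\<close>

definition sq :: "'a::field \<Rightarrow> int" where
  "sq x = (if \<exists>y. y * y = x then 1 else -1)"

definition SP :: "'a::field \<Rightarrow> 'a \<Rightarrow> int option" where
  "SP x y = (if x = y then None else Some (sq (y - x)))"

text \<open>SP_q^+: add a vertex infinity (represented by None) joined positively to everything.\<close>
fun SPplus :: "'a::field option \<Rightarrow> 'a option \<Rightarrow> int option" where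
  "SPplus None None = None"
| "SPplus None (Some v) = Some 1"
| "SPplus (Some u) None = Some 1"
| "SPplus (Some u) (Some v) = SP u v"

text \<open>Antitwinned graph AT(H): vertices (u,i) with i :: bool standing for index 0/1.\<close>
definition AT :: "('v \<Rightarrow> 'v \<Rightarrow> int option) \<Rightarrow> ('v \<times> bool) \<Rightarrow> ('v \<times> bool) \<Rightarrow> int option" where
  "AT H x y = map_option (\<lambda>s. if snd x = snd y then s else - s) (H (fst x) (fst y))"

definition Tr :: "('a::field option \<times> bool) \<Rightarrow> ('a option \<times> bool) \<Rightarrow> int option" where
  "Tr = AT SPplus"

definition successors :: "('v \<Rightarrow> 'v \<Rightarrow> int option) \<Rightarrow> 'v list \<Rightarrow> int list \<Rightarrow> 'v set" where
  "successors G X \<alpha> = {u. \<forall>i < length X. G u (X ! i) = Some (\<alpha> ! i)}"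

text \<open>Property P(k,l) (the vertex set is the whole finite vertex type; l is an integer).\<close>
definition propP :: "('v \<Rightarrow> 'v \<Rightarrow> int option) \<Rightarrow> nat \<Rightarrow> int \<Rightarrow> bool" where
  "propP G k l = (\<forall>X \<alpha>. length X = k \<and> distinct X
      \<and> (\<forall>i<k. \<forall>j<k. i \<noteq> j \<longrightarrow> G (X ! i) (X ! j) \<noteq> None)
      \<and> length \<alpha> = k \<and> set \<alpha> \<subseteq> {1, -1}
      \<longrightarrow> int (card (successors G X \<alpha>)) \<ge> l)"

end

theory Submission imports Defs begin

lemma inv_even:
  assumes "finite U" "\<forall>x\<in>U. f x \<in> U \<and> f (f x) = x \<and> f x \<noteq> x"
  shows "even (card U)"
  using assms
proof (induction "card U" arbitrary: U rule: less_induct)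
  case less
  show ?case
  proof (cases "U = {}")
    case True thus ?thesis by simp
  next
    case False
    then obtain x where x: "x \<in> U" by auto
    define U' where "U' = U - {x, f x}"
    have fx: "f x \<in> U" "f x \<noteq> x" using less.prems x by auto
    have c2: "card {x, f x} \<le> card U" by (rule card_mono) (use less.prems fx x in auto)
    have c2': "card {x, f x} = 2" using fx by simp
    have cU: "card U' = card U - 2" unfolding U'_def using fx x less.prems(1)
      by (subst card_Diff_subset) (auto simp: c2')
    have lt: "card U' < card U" using cU c2 c2' by simp
    have cl: "\<forall>y\<in>U'. f y \<in> U' \<and> f (f y) = y \<and> f y \<noteq> y"
    proof
      fix y assume y: "y \<in> U'"
      hence yU: "y \<in> U" "y \<noteq> x" "y \<noteq> f x" unfolding U'_def by auto
      have h: "f y \<in> U" "f (f y) = y" "f y \<noteq> y" using less.prems yU by auto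
      have "f y \<noteq> x" using h yU by metis
      moreover have "f y \<noteq> f x" using h yU less.prems x by metis
      ultimately show "f y \<in> U' \<and> f (f y) = y \<and> f y \<noteq> y" using h unfolding U'_def by auto
    qed
    have "even (card U')" using less.hyps[OF lt] cl less.prems(1) unfolding U'_def by auto
    thus ?thesis using cU c2 c2' by presburger
  qed
qed

lemma two_ne0:
  assumes q4: "card (UNIV::'a::{finite,field} set) mod 4 = 1"
  shows "(1::'a) + 1 \<noteq> 0"
proof
  assume h: "(1::'a) + 1 = 0"
  have "even (card (UNIV::'a set))"
    by (rule inv_even[where f="\<lambda>x. x+1"]) (use h in \<open>auto simp: add.assoc\<close>)
  with q4 show False by presburger
qed

definition issq :: "'a::field \<Rightarrow> bool" where "issq x \<longleftrightarrow> (\<exists>y. y * y = x)"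

lemma sq_issq: "sq x = (if issq x then 1 else -1)"
  by (simp add: sq_def issq_def)

lemma card_sq:
  assumes q4: "card (UNIV::'a::{finite,field} set) mod 4 = 1"
  shows "2 * card {x::'a. x \<noteq> 0 \<and> issq x} = card (UNIV::'a set) - 1"
proof -
  let ?S = "{x::'a. x \<noteq> 0 \<and> issq x}"
  have U: "UNIV - {0} = (\<Union>s\<in>?S. {r. r*r = s})"
    by (auto simp: issq_def)
  have fib: "card {r. r*r = s} = 2" if "s \<in> ?S" for s
  proof -
    from that obtain r0 where r0a: "r0 * r0 = s" by (auto simp: issq_def)
    have r0: "r0 * r0 = s" "r0 \<noteq> 0" using r0a that by auto
    have "{r. r*r = s} = {r0, -r0}" using r0 by (auto simp: square_eq_iff)
    moreover have "r0 \<noteq> -r0"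
    proof
      assume "r0 = -r0"
      hence "(1+1) * r0 = 0" by (simp add: distrib_right)
      thus False using r0 two_ne0[OF q4] by simp
    qed
    ultimately show ?thesis by simp
  qed
  have "card (UNIV - {0::'a}) = (\<Sum>s\<in>?S. card {r. r*r = s})"
    unfolding U by (rule card_UN_disjoint) auto
  also have "\<dots> = 2 * card ?S" using fib by simp
  finally show ?thesis by simp
qed

lemma card_nsq:
  assumes q4: "card (UNIV::'a::{finite,field} set) mod 4 = 1"
  shows "card {x::'a. x \<noteq> 0 \<and> \<not> issq x} = card {x::'a. x \<noteq> 0 \<and> issq x}"
proof -
  have "UNIV - {0::'a} = {x::'a. x \<noteq> 0 \<and> issq x} \<union> {x::'a. x \<noteq> 0 \<and> \<not> issq x}" by auto
  hence "card (UNIV - {0::'a}) = card {x::'a. x \<noteq> 0 \<and> issq x} + card {x::'a. x \<noteq> 0 \<and> \<not> issq x}"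
    by (metis (no_types, lifting) card_Un_disjoint disjoint_iff finite mem_Collect_eq)
  thus ?thesis using card_sq[OF q4] by simp
qed

lemma minus_one_sq:
  assumes q4: "card (UNIV::'a::{finite,field} set) mod 4 = 1"
  shows "issq (-1::'a)"
proof (rule ccontr)
  assume n: "\<not> issq (-1::'a)"
  let ?S = "{x::'a. x \<noteq> 0 \<and> issq x}"
  have "even (card (?S - {1}))"
  proof (rule inv_even[where f=inverse], simp, intro ballI conjI)
    fix y assume y: "y \<in> ?S - {1}"
    then obtain r where r: "r * r = y" "y \<noteq> 0" "y \<noteq> 1" by (auto simp: issq_def)
    have "inverse y = inverse r * inverse r" using r by (simp add: inverse_mult_distrib[symmetric])
    moreover have "inverse y \<noteq> 0" "inverse y \<noteq> 1" using r by auto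
    ultimately show "inverse y \<in> ?S - {1}" by (auto simp: issq_def)
    show "inverse (inverse y) = y" by simp
    show "inverse y \<noteq> y"
    proof
      assume "inverse y = y"
      hence "y * y = 1 * 1" using r by (metis mult_1 right_inverse)
      hence "y = 1 \<or> y = -1" using square_eq_iff[of y 1] by simp
      thus False using r n y by (auto simp: issq_def)
    qed
  qed
  moreover have "1 \<in> ?S" by (auto simp: issq_def intro: exI[of _ 1])
  hence "card (?S - {1}) = card ?S - 1" by simp
  moreover have "card ?S \<ge> 1" using \<open>1 \<in> ?S\<close> by (metis One_nat_def Suc_leI card_gt_0_iff empty_iff finite)
  moreover have "even (card ?S)" using card_sq[OF q4] q4 by presburger
  ultimately show False by presburger
qed

lemma nsq_mult:
  assumes q4: "card (UNIV::'a::{finite,field} set) mod 4 = 1"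
    and x: "(x::'a) \<noteq> 0" "\<not> issq x" and y: "y \<noteq> 0" "\<not> issq y"
  shows "issq (x * y)"
proof -
  let ?S = "{x::'a. x \<noteq> 0 \<and> issq x}"
  let ?N = "{x::'a. x \<noteq> 0 \<and> \<not> issq x}"
  have sub: "(\<lambda>s. x * s) ` ?S \<subseteq> ?N"
  proof
    fix z assume "z \<in> (\<lambda>s. x * s) ` ?S"
    then obtain s r where s: "z = x * s" "s \<noteq> 0" "r * r = s" by (auto simp: issq_def)
    have "\<not> issq z"
    proof
      assume "issq z"
      then obtain t where t: "t * t = z" by (auto simp: issq_def)
      have "r \<noteq> 0" using s by auto
      hence "(t / r) * (t / r) = x" using s t by (simp add: field_simps)
      thus False using x unfolding issq_def by blast
    qed
    thus "z \<in> ?N" using s x by auto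
  qed
  have inj: "inj_on (\<lambda>s. x * s) ?S" using x by (auto simp: inj_on_def)
  have "card ((\<lambda>s. x * s) ` ?S) = card ?N"
    using card_image[OF inj] card_nsq[OF q4] by simp
  hence eq: "(\<lambda>s. x * s) ` ?S = ?N" using sub by (intro card_subset_eq) auto
  have "y \<in> ?N" using y by auto
  then obtain s where s: "s \<in> ?S" "y = x * s" using eq by (metis (no_types, lifting) imageE)
  then obtain r where "r * r = s" by (auto simp: issq_def)
  hence "(x * r) * (x * r) = x * y" using s by (simp add: algebra_simps)
  thus ?thesis unfolding issq_def by blast
qed

lemma sq_mult:
  assumes q4: "card (UNIV::'a::{finite,field} set) mod 4 = 1"
    and x: "(x::'a) \<noteq> 0" and y: "y \<noteq> 0"
  shows "sq (x * y) = sq x * sq y"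
proof (cases "issq x")
  case True
  then obtain a where a: "a * a = x" by (auto simp: issq_def)
  have a0: "a \<noteq> 0" using a x by auto
  show ?thesis
  proof (cases "issq y")
    case True
    then obtain b where b: "b * b = y" by (auto simp: issq_def)
    have "(a*b)*(a*b) = x * y" using a b by (simp add: algebra_simps)
    thus ?thesis using \<open>issq x\<close> True by (auto simp: sq_issq issq_def)
  next
    case False
    have "\<not> issq (x * y)"
    proof
      assume "issq (x*y)"
      then obtain c where c: "c * c = x * y" by (auto simp: issq_def)
      hence "(c/a)*(c/a) = y" using a a0 x by (simp add: field_simps)
      thus False using False unfolding issq_def by blast
    qed
    thus ?thesis using \<open>issq x\<close> False by (auto simp: sq_issq)
  qed
next
  case False
  show ?thesis
  proof (cases "issq y")
    case True
    then obtain b where b: "b * b = y" by (auto simp: issq_def)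
    have b0: "b \<noteq> 0" using b y by auto
    have "\<not> issq (x * y)"
    proof
      assume "issq (x*y)"
      then obtain c where c: "c * c = x * y" by (auto simp: issq_def)
      hence "(c/b)*(c/b) = x" using b b0 y by (simp add: field_simps)
      thus False using False unfolding issq_def by blast
    qed
    thus ?thesis using \<open>\<not> issq x\<close> True by (auto simp: sq_issq)
  next
    case False2: False
    have "issq (x*y)" by (rule nsq_mult[OF q4 x False y False2])
    thus ?thesis using False False2 by (auto simp: sq_issq)
  qed
qed

lemma sq_neg:
  assumes q4: "card (UNIV::'a::{finite,field} set) mod 4 = 1"
  shows "sq (- (x::'a)) = sq x"
proof -
  obtain i :: 'a where i: "i * i = -1" using minus_one_sq[OF q4] by (auto simp: issq_def)
  have "issq (-x) \<longleftrightarrow> issq x"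
  proof
    assume "issq (-x)"
    then obtain r where "r * r = -x" by (auto simp: issq_def)
    hence "(i*r)*(i*r) = x" using i by (metis minus_minus mult.commute mult.left_commute mult_minus1 mult.assoc)
    thus "issq x" by (auto simp: issq_def)
  next
    assume "issq x"
    then obtain r where "r * r = x" by (auto simp: issq_def)
    hence "(i*r)*(i*r) = -x" using i by (metis mult.commute mult.left_commute mult_minus1 mult.assoc)
    thus "issq (-x)" by (auto simp: issq_def)
  qed
  thus ?thesis by (simp add: sq_issq)
qed

lemma sq_sym:
  assumes q4: "card (UNIV::'a::{finite,field} set) mod 4 = 1"
  shows "sq ((a::'a) - b) = sq (b - a)"
  using sq_neg[OF q4, of "a - b"] by simp

lemma sq_inverse: "sq (inverse (x::'a::field)) = sq x"
proof -
  have "issq (inverse x) \<longleftrightarrow> issq x"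
    by (auto simp: issq_def) (metis inverse_inverse_eq inverse_mult_distrib)+
  thus ?thesis by (simp add: sq_issq)
qed

lemma sq_pm: "sq x = 1 \<or> sq x = -1"
  by (simp add: sq_def)

lemma sq_one: "sq (1::'a::field) = 1"
  by (auto simp: sq_def intro: exI[of _ 1])

lemma sum_sq0:
  assumes q4: "card (UNIV::'a::{finite,field} set) mod 4 = 1"
  shows "(\<Sum>y\<in>UNIV - {0::'a}. sq y) = 0"
proof -
  have "(\<Sum>y\<in>UNIV - {0::'a}. sq y) = (\<Sum>y\<in>UNIV - {0::'a}. if issq y then 1 else -1)"
    by (simp add: sq_issq)
  also have "\<dots> = (\<Sum>y\<in>(UNIV - {0::'a}) \<inter> {y. issq y}. 1) + (\<Sum>y\<in>(UNIV - {0::'a}) \<inter> - {y. issq y}. -1)"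
    by (rule sum.If_cases) simp
  also have "(UNIV - {0::'a}) \<inter> {y. issq y} = {x::'a. x \<noteq> 0 \<and> issq x}" by auto
  also have "(UNIV - {0::'a}) \<inter> - {y. issq y} = {x::'a. x \<noteq> 0 \<and> \<not> issq x}" by auto
  finally show ?thesis using card_nsq[OF q4] by simp
qed

lemma sum_shift:
  assumes q4: "card (UNIV::'a::{finite,field} set) mod 4 = 1"
  shows "(\<Sum>x\<in>UNIV - {a::'a}. sq (x - a)) = 0"
proof -
  have "(\<Sum>x\<in>UNIV - {a::'a}. sq (x - a)) = (\<Sum>y\<in>UNIV - {0::'a}. sq y)"
    by (rule sum.reindex_bij_witness[where i="\<lambda>y. y + a" and j="\<lambda>x. x - a"]) auto
  thus ?thesis using sum_sq0[OF q4] by simp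
qed

lemma sum_minus_pt:
  assumes q4: "card (UNIV::'a::{finite,field} set) mod 4 = 1" and ab: "(a::'a) \<noteq> b"
  shows "(\<Sum>x\<in>UNIV - {a, b}. sq (x - a)) = - sq (b - a)"
proof -
  have "UNIV - {a} = insert b (UNIV - {a, b})" using ab by auto
  hence "(\<Sum>x\<in>UNIV - {a}. sq (x - a)) = sq (b - a) + (\<Sum>x\<in>UNIV - {a, b}. sq (x - a))"
    by simp
  thus ?thesis using sum_shift[OF q4, of a] by simp
qed

lemma cancel_helper: "(d::'a::field) \<noteq> 0 \<Longrightarrow> c \<noteq> 0 \<Longrightarrow> (x * c / d) / (c / d) = x"
  by (simp add: field_simps)

lemma sum_pair:
  assumes q4: "card (UNIV::'a::{finite,field} set) mod 4 = 1" and ab: "(a::'a) \<noteq> b"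
  shows "(\<Sum>x\<in>UNIV - {a, b}. sq (x - a) * sq (x - b)) = -1"
proof -
  have "(\<Sum>x\<in>UNIV - {a, b}. sq (x - a) * sq (x - b)) = (\<Sum>y\<in>UNIV - {0, 1::'a}. sq y)"
  proof (rule sum.reindex_bij_witness[where i="\<lambda>y. (y*b - a)/(y - 1)" and j="\<lambda>x. (x-a)/(x-b)"])
    fix x assume x: "x \<in> UNIV - {a, b}"
    hence xa: "x - a \<noteq> 0" and xb: "x - b \<noteq> 0" by auto
    have ba: "b - a \<noteq> 0" using ab by auto
    have d: "(x - a) / (x - b) - 1 = (b - a) / (x - b)" using xb by (simp add: field_simps)
    have n: "(x - a) / (x - b) * b - a = x * (b - a) / (x - b)" using xb by (simp add: field_simps)
    show "((x - a) / (x - b) * b - a) / ((x - a) / (x - b) - 1) = x"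
      unfolding d n using xb ba by (rule cancel_helper)
    show "(x - a) / (x - b) \<in> UNIV - {0, 1}"
      using xa xb ab by (auto simp: field_simps)
    show "sq ((x - a) / (x - b)) = sq (x - a) * sq (x - b)"
      using sq_mult[OF q4 xa, of "inverse (x - b)"] xb by (simp add: divide_inverse sq_inverse)
  next
    fix y :: 'a assume y: "y \<in> UNIV - {0, 1}"
    hence y1: "y - 1 \<noteq> 0" and y0: "y \<noteq> 0" by auto
    have ba: "b - a \<noteq> 0" using ab by auto
    have e1: "(y * b - a) / (y - 1) - a = y * (b - a) / (y - 1)" using y1 by (simp add: field_simps)
    have e2: "(y * b - a) / (y - 1) - b = (b - a) / (y - 1)" using y1 by (simp add: field_simps)
    show "((y * b - a) / (y - 1) - a) / ((y * b - a) / (y - 1) - b) = y"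
      unfolding e1 e2 using y1 ba by (rule cancel_helper)
    show "(y * b - a) / (y - 1) \<in> UNIV - {a, b}"
    proof -
      have "(y * b - a) / (y - 1) - a \<noteq> 0" unfolding e1 using y0 y1 ba by simp
      moreover have "(y * b - a) / (y - 1) - b \<noteq> 0" unfolding e2 using y1 ba by simp
      ultimately show ?thesis by auto
    qed
  qed
  also have "\<dots> = -1"
  proof -
    have "UNIV - {0::'a} = insert 1 (UNIV - {0, 1})" by auto
    hence "(\<Sum>y\<in>UNIV - {0::'a}. sq y) = sq (1::'a) + (\<Sum>y\<in>UNIV - {0, 1::'a}. sq y)" by simp
    thus ?thesis using sum_sq0[OF q4] sq_one[where 'a='a] by simp
  qed
  finally show ?thesis .
qed

lemma card_ind:
  assumes "finite A"
  shows "int (card {x\<in>A. P x}) = (\<Sum>x\<in>A. if P x then 1 else 0)"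
proof -
  have "int (card {x\<in>A. P x}) = (\<Sum>x\<in>{x\<in>A. P x}. 1)" by simp
  also have "\<dots> = (\<Sum>x\<in>A. if P x then 1 else 0)" using assms by (rule sum.inter_filter)
  finally show ?thesis .
qed

lemma count2:
  fixes f g :: "'x \<Rightarrow> int"
  assumes A: "finite A" and f: "\<forall>x\<in>A. f x = 1 \<or> f x = -1" and g: "\<forall>x\<in>A. g x = 1 \<or> g x = -1"
    and e1: "e1 = 1 \<or> e1 = -1" and e2: "e2 = 1 \<or> e2 = -1"
  shows "4 * int (card {x\<in>A. f x = e1 \<and> g x = e2}) = int (card A) + e1 * sum f A + e2 * sum g A + e1 * e2 * (\<Sum>x\<in>A. f x * g x)"
proof -
  have "4 * int (card {x\<in>A. f x = e1 \<and> g x = e2}) = (\<Sum>x\<in>A. 4 * (if f x = e1 \<and> g x = e2 then 1 else 0))"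
    by (simp add: card_ind[OF A] sum_distrib_left)
  also have "\<dots> = (\<Sum>x\<in>A. 1 + e1 * f x + e2 * g x + e1 * e2 * (f x * g x))"
  proof (rule sum.cong[OF refl])
    fix x assume "x \<in> A"
    thus "4 * (if f x = e1 \<and> g x = e2 then 1 else 0) = 1 + e1 * f x + e2 * g x + e1 * e2 * (f x * g x)"
      using f g e1 e2 by auto
  qed
  also have "\<dots> = int (card A) + e1 * sum f A + e2 * sum g A + e1 * e2 * (\<Sum>x\<in>A. f x * g x)"
    by (simp add: sum.distrib sum_distrib_left)
  finally show ?thesis .
qed

lemma count1:
  fixes f :: "'x \<Rightarrow> int"
  assumes A: "finite A" and f: "\<forall>x\<in>A. f x = 1 \<or> f x = -1"
    and e1: "e1 = 1 \<or> e1 = -1"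
  shows "2 * int (card {x\<in>A. f x = e1}) = int (card A) + e1 * sum f A"
  using count2[OF A f, of "\<lambda>_. 1" e1 1] e1 by simp

lemma succ1: "successors G [a] [e] = {u. G u a = Some e}"
  by (auto simp: successors_def)

lemma succ2: "successors G [a, b] [e1, e2] = {u. G u a = Some e1 \<and> G u b = Some e2}"
  unfolding successors_def by (auto simp: numeral_2_eq_2 All_less_Suc2)

lemma succ3: "successors G [a, b, c] [e1, e2, e3] = {u. G u a = Some e1 \<and> G u b = Some e2 \<and> G u c = Some e3}"
  unfolding successors_def by (auto simp: numeral_3_eq_3 All_less_Suc2)

lemma len1: "length xs = 1 \<Longrightarrow> \<exists>a. xs = [a]"
  by (cases xs) auto

lemma len2: "length xs = 2 \<Longrightarrow> \<exists>a b. xs = [a, b]"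
  by (auto simp: numeral_2_eq_2 length_Suc_conv)

lemma len3: "length xs = 3 \<Longrightarrow> \<exists>a b c. xs = [a, b, c]"
  by (auto simp: numeral_3_eq_3 length_Suc_conv)

lemma propP_I:
  assumes "\<And>Y \<beta>. length Y = k \<Longrightarrow> (\<forall>i<k. \<forall>j<k. i \<noteq> j \<longrightarrow> G (Y!i) (Y!j) \<noteq> None)
     \<Longrightarrow> length \<beta> = k \<Longrightarrow> set \<beta> \<subseteq> {1, -1} \<Longrightarrow> l \<le> int (card (successors G Y \<beta>))"
  shows "propP G k l"
  using assms unfolding propP_def by blast

lemma map_opt_neg: "map_option (\<lambda>s. if c then s else - s) ov = Some (a::int) \<longleftrightarrow> ov = Some (if c then a else - a)"
  by (cases ov) auto

lemma AT_succ:
  fixes H :: "'v \<Rightarrow> 'v \<Rightarrow> int option"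
  assumes len: "length \<alpha> = length X"
  defines "\<beta> \<equiv> map (\<lambda>i. if snd (X!i) then \<alpha>!i else - (\<alpha>!i)) [0..<length X]"
  shows "successors (AT H) X \<alpha> = (\<lambda>w. (w,True)) ` successors H (map fst X) \<beta>
            \<union> (\<lambda>w. (w,False)) ` successors H (map fst X) (map uminus \<beta>)"
proof (rule set_eqI)
  fix z :: "'v \<times> bool"
  obtain w k where z: "z = (w,k)" by (cases z)
  have key: "z \<in> successors (AT H) X \<alpha> \<longleftrightarrow>
      (\<forall>i<length X. H w (fst (X!i)) = Some (if k = snd (X!i) then \<alpha>!i else -(\<alpha>!i)))"
  proof -
    have pw: "\<And>i. (AT H (w,k) (X!i) = Some (\<alpha>!i)) = (H w (fst (X!i)) = Some (if k = snd (X!i) then \<alpha>!i else -(\<alpha>!i)))"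
      by (simp only: AT_def fst_conv snd_conv map_opt_neg)
    show ?thesis by (simp only: successors_def z mem_Collect_eq pw)
  qed
  show "z \<in> successors (AT H) X \<alpha> \<longleftrightarrow> z \<in> (\<lambda>w. (w,True)) ` successors H (map fst X) \<beta>
            \<union> (\<lambda>w. (w,False)) ` successors H (map fst X) (map uminus \<beta>)"
    unfolding key by (cases k) (auto simp: successors_def \<beta>_def z)
qed

lemma AT_card:
  fixes H :: "'v::finite \<Rightarrow> 'v \<Rightarrow> int option"
  assumes len: "length \<alpha> = length X"
  defines "\<beta> \<equiv> map (\<lambda>i. if snd (X!i) then \<alpha>!i else - (\<alpha>!i)) [0..<length X]"
  shows "card (successors (AT H) X \<alpha>) = card (successors H (map fst X) \<beta>) + card (successors H (map fst X) (map uminus \<beta>))"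
proof -
  have i1: "inj (\<lambda>w::'v. (w,True))" and i2: "inj (\<lambda>w::'v. (w,False))" by (auto simp: inj_on_def)
  have "card (successors (AT H) X \<alpha>) = card ((\<lambda>w. (w,True)) ` successors H (map fst X) \<beta>)
      + card ((\<lambda>w. (w,False)) ` successors H (map fst X) (map uminus \<beta>))"
    unfolding AT_succ[OF len] \<beta>_def by (rule card_Un_disjoint) auto
  also have "\<dots> = card (successors H (map fst X) \<beta>) + card (successors H (map fst X) (map uminus \<beta>))"
    using card_image[OF inj_on_subset[OF i1 subset_UNIV]] card_image[OF inj_on_subset[OF i2 subset_UNIV]] by simp
  finally show ?thesis .
qed

lemma propP_AT:
  fixes H :: "'v::finite \<Rightarrow> 'v \<Rightarrow> int option"
  assumes h: "\<And>Y \<beta>. length Y = k \<Longrightarrow> (\<forall>i<k. \<forall>j<k. i \<noteq> j \<longrightarrow> H (Y!i) (Y!j) \<noteq> None)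
     \<Longrightarrow> length \<beta> = k \<Longrightarrow> set \<beta> \<subseteq> {1, -1}
     \<Longrightarrow> l \<le> int (card (successors H Y \<beta>)) + int (card (successors H Y (map uminus \<beta>)))"
  shows "propP (AT H) k l"
  unfolding propP_def
proof (intro allI impI, elim conjE)
  fix X :: "('v \<times> bool) list" and \<alpha> :: "int list" assume X: "length X = k" "distinct X" "\<forall>i<k. \<forall>j<k. i\<noteq>j \<longrightarrow> AT H (X!i) (X!j) \<noteq> None"
    and a: "length \<alpha> = k" "set \<alpha> \<subseteq> {1,-1}"
  define \<beta> where "\<beta> = map (\<lambda>i. if snd (X!i) then \<alpha>!i else -(\<alpha>!i)) [0..<length X]"
  have adj: "\<forall>i<k. \<forall>j<k. i\<noteq>j \<longrightarrow> H (map fst X ! i) (map fst X ! j) \<noteq> None"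
    using X by (auto simp: AT_def)
  have lb: "length \<beta> = k" using X by (simp add: \<beta>_def)
  have sb: "set \<beta> \<subseteq> {1,-1}"
  proof
    fix v assume "v \<in> set \<beta>"
    then obtain i where i: "i < length X" "v = (if snd (X!i) then \<alpha>!i else -(\<alpha>!i))" by (auto simp: \<beta>_def)
    have "\<alpha>!i \<in> set \<alpha>" using a X i by simp
    hence "\<alpha>!i \<in> {1,-1}" using a by blast
    thus "v \<in> {1,-1}" using i by auto
  qed
  have "l \<le> int (card (successors H (map fst X) \<beta>)) + int (card (successors H (map fst X) (map uminus \<beta>)))"
    using h[of "map fst X" \<beta>] adj lb sb X by simp
  also have "\<dots> = int (card (successors (AT H) X \<alpha>))" using AT_card[of \<alpha> X H] a X by (simp add: \<beta>_def)
  finally show "l \<le> int (card (successors (AT H) X \<alpha>))" .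
qed

lemma SP_eq:
  assumes q4: "card (UNIV::'a::{finite,field} set) mod 4 = 1"
  shows "SP u (v::'a) = Some e \<longleftrightarrow> u \<noteq> v \<and> sq (u - v) = e"
  using sq_sym[OF q4, of v u] by (auto simp: SP_def)

lemma cardD: "int (card (UNIV - (A::'a::finite set))) = int (card (UNIV::'a::finite set)) - int (card A)"
proof -
  have "card A \<le> card (UNIV::'a set)" by (rule card_mono) auto
  thus ?thesis by (simp add: card_Diff_subset of_nat_diff)
qed

lemma N1:
  assumes q4: "card (UNIV::'a::{finite,field} set) mod 4 = 1" and e: "e = 1 \<or> e = -1"
  shows "2 * int (card {u. SP u (a::'a) = Some e}) = int (card (UNIV::'a set)) - 1"
proof -
  have s: "{u. SP u a = Some e} = {x \<in> UNIV - {a}. sq (x - a) = e}" by (auto simp: SP_eq[OF q4])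
  have c: "2 * int (card {x \<in> UNIV - {a}. sq (x - a) = e}) = int (card (UNIV - {a})) + e * (\<Sum>x\<in>UNIV - {a}. sq (x - a))"
    by (rule count1[of "UNIV - {a}" "\<lambda>x. sq (x - a)" e]) (use e in \<open>simp_all add: sq_def\<close>)
  show ?thesis unfolding s using c sum_shift[OF q4, of a] cardD[of "{a}"] by simp
qed

lemma N2:
  assumes q4: "card (UNIV::'a::{finite,field} set) mod 4 = 1" and ab: "(a::'a) \<noteq> b"
    and e1: "e1 = 1 \<or> e1 = -1" and e2: "e2 = 1 \<or> e2 = -1"
  shows "4 * int (card {u. SP u a = Some e1 \<and> SP u b = Some e2})
     = int (card (UNIV::'a set)) - 2 - (e1 + e2) * sq (a - b) - e1 * e2"
proof -
  have s: "{u. SP u a = Some e1 \<and> SP u b = Some e2} = {x \<in> UNIV - {a, b}. sq (x - a) = e1 \<and> sq (x - b) = e2}"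
    by (auto simp: SP_eq[OF q4])
  have "4 * int (card {x \<in> UNIV - {a, b}. sq (x - a) = e1 \<and> sq (x - b) = e2}) = int (card (UNIV - {a, b}))
      + e1 * (\<Sum>x\<in>UNIV - {a, b}. sq (x - a)) + e2 * (\<Sum>x\<in>UNIV - {a, b}. sq (x - b))
      + e1 * e2 * (\<Sum>x\<in>UNIV - {a, b}. sq (x - a) * sq (x - b))"
    by (rule count2[of "UNIV - {a,b}" "\<lambda>x. sq (x - a)" "\<lambda>x. sq (x - b)" e1 e2]) (use e1 e2 in \<open>simp_all add: sq_def\<close>)
  hence "4 * int (card {u. SP u a = Some e1 \<and> SP u b = Some e2}) = int (card (UNIV - {a, b}))
      + e1 * (\<Sum>x\<in>UNIV - {a, b}. sq (x - a)) + e2 * (\<Sum>x\<in>UNIV - {a, b}. sq (x - b))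
      + e1 * e2 * (\<Sum>x\<in>UNIV - {a, b}. sq (x - a) * sq (x - b))" unfolding s .
  moreover have "(\<Sum>x\<in>UNIV - {a, b}. sq (x - a)) = - sq (a - b)"
    using sum_minus_pt[OF q4 ab] sq_sym[OF q4, of a b] by simp
  moreover have "(\<Sum>x\<in>UNIV - {a, b}. sq (x - b)) = - sq (a - b)"
    using sum_minus_pt[OF q4 ab[symmetric]] by (simp add: insert_commute)
  moreover have "(\<Sum>x\<in>UNIV - {a, b}. sq (x - a) * sq (x - b)) = -1" by (rule sum_pair[OF q4 ab])
  moreover have "int (card (UNIV - {a, b})) = int (card (UNIV::'a set)) - 2"
    using cardD[of "{a,b}"] ab by simp
  ultimately show ?thesis by (simp add: algebra_simps)
qed

lemma sgn3: "(A::int) = 1 \<or> A = -1 \<Longrightarrow> B = 1 \<or> B = -1 \<Longrightarrow> C = 1 \<or> C = -1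
  \<Longrightarrow> e1 = 1 \<or> e1 = -1 \<Longrightarrow> e2 = 1 \<or> e2 = -1 \<Longrightarrow> e3 = 1 \<or> e3 = -1
  \<Longrightarrow> ((A = e1 \<and> B = e2 \<and> C = e3) \<or> (A = -e1 \<and> B = -e2 \<and> C = -e3)) \<longleftrightarrow> (A * B = e1 * e2 \<and> A * C = e1 * e3)"
  by (elim disjE) auto

lemma N3:
  assumes q4: "card (UNIV::'a::{finite,field} set) mod 4 = 1"
    and ab: "(a::'a) \<noteq> b" and ac: "a \<noteq> c" and bc: "b \<noteq> c"
    and e1: "e1 = 1 \<or> e1 = -1" and e2: "e2 = 1 \<or> e2 = -1" and e3: "e3 = 1 \<or> e3 = -1"
  shows "4 * (int (card {u. SP u a = Some e1 \<and> SP u b = Some e2 \<and> SP u c = Some e3})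
            + int (card {u. SP u a = Some (-e1) \<and> SP u b = Some (-e2) \<and> SP u c = Some (-e3)}))
     = int (card (UNIV::'a set)) - 3 - e1 * e2 * (1 + sq (c - a) * sq (c - b))
        - e1 * e3 * (1 + sq (b - a) * sq (b - c)) - e2 * e3 * (1 + sq (a - b) * sq (a - c))"
proof -
  let ?A = "UNIV - {a, b, c}"
  let ?S1 = "{u. SP u a = Some e1 \<and> SP u b = Some e2 \<and> SP u c = Some e3}"
  let ?S2 = "{u. SP u a = Some (-e1) \<and> SP u b = Some (-e2) \<and> SP u c = Some (-e3)}"
  have un: "?S1 \<union> ?S2 = {x\<in>?A. sq (x - a) * sq (x - b) = e1 * e2 \<and> sq (x - a) * sq (x - c) = e1 * e3}"
  proof (rule set_eqI)
    fix x
    show "x \<in> ?S1 \<union> ?S2 \<longleftrightarrow> x \<in> {x\<in>?A. sq (x - a) * sq (x - b) = e1 * e2 \<and> sq (x - a) * sq (x - c) = e1 * e3}"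
    proof (cases "x = a \<or> x = b \<or> x = c")
      case True thus ?thesis by (auto simp: SP_def)
    next
      case False
      hence "x \<in> ?S1 \<union> ?S2 \<longleftrightarrow> ((sq (x - a) = e1 \<and> sq (x - b) = e2 \<and> sq (x - c) = e3) \<or> (sq (x - a) = -e1 \<and> sq (x - b) = -e2 \<and> sq (x - c) = -e3))"
        by (simp add: SP_eq[OF q4])
      also have "\<dots> \<longleftrightarrow> (sq (x - a) * sq (x - b) = e1 * e2 \<and> sq (x - a) * sq (x - c) = e1 * e3)"
        by (rule sgn3[OF sq_pm sq_pm sq_pm e1 e2 e3])
      finally show ?thesis using False by simp
    qed
  qed
  have dj: "?S1 \<inter> ?S2 = {}" using e1 by auto
  have cu: "card (?S1 \<union> ?S2) = card ?S1 + card ?S2" using dj by (intro card_Un_disjoint) auto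
  have ee: "e1 * e2 * (e1 * e3) = e2 * e3" using e1 by auto
  have fg: "(\<Sum>x\<in>?A. sq (x - a) * sq (x - b) * (sq (x - a) * sq (x - c))) = (\<Sum>x\<in>?A. sq (x - b) * sq (x - c))"
  proof (rule sum.cong[OF refl])
    fix x
    have r: "sq (x - a) * sq (x - b) * (sq (x - a) * sq (x - c)) = (sq (x - a) * sq (x - a)) * (sq (x - b) * sq (x - c))"
      by (simp add: mult_ac)
    have "sq (x - a) * sq (x - a) = 1" using sq_pm[of "x - a"] by auto
    thus "sq (x - a) * sq (x - b) * (sq (x - a) * sq (x - c)) = sq (x - b) * sq (x - c)" unfolding r by simp
  qed
  have c2: "4 * int (card (?S1 \<union> ?S2)) = int (card ?A) + e1 * e2 * (\<Sum>x\<in>?A. sq (x - a) * sq (x - b))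
       + e1 * e3 * (\<Sum>x\<in>?A. sq (x - a) * sq (x - c)) + e2 * e3 * (\<Sum>x\<in>?A. sq (x - b) * sq (x - c))"
  proof -
    have "4 * int (card {x\<in>?A. sq (x - a) * sq (x - b) = e1 * e2 \<and> sq (x - a) * sq (x - c) = e1 * e3})
      = int (card ?A) + e1 * e2 * (\<Sum>x\<in>?A. sq (x - a) * sq (x - b))
       + e1 * e3 * (\<Sum>x\<in>?A. sq (x - a) * sq (x - c)) + e1 * e2 * (e1 * e3) * (\<Sum>x\<in>?A. sq (x - a) * sq (x - b) * (sq (x - a) * sq (x - c)))"
      by (rule count2[of ?A "\<lambda>x. sq (x - a) * sq (x - b)" "\<lambda>x. sq (x - a) * sq (x - c)" "e1 * e2" "e1 * e3"])
        (use e1 e2 e3 in \<open>auto simp: sq_def\<close>)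
    thus ?thesis unfolding un ee fg .
  qed
  have s1: "(\<Sum>x\<in>?A. sq (x - a) * sq (x - b)) = -1 - sq (c - a) * sq (c - b)"
  proof -
    have "UNIV - {a, b} = insert c ?A" using ac bc by auto
    hence "(\<Sum>x\<in>UNIV - {a, b}. sq (x - a) * sq (x - b)) = sq (c - a) * sq (c - b) + (\<Sum>x\<in>?A. sq (x - a) * sq (x - b))"
      by simp
    thus ?thesis using sum_pair[OF q4 ab] by simp
  qed
  have s2: "(\<Sum>x\<in>?A. sq (x - a) * sq (x - c)) = -1 - sq (b - a) * sq (b - c)"
  proof -
    have "UNIV - {a, c} = insert b ?A" using ab bc by auto
    hence "(\<Sum>x\<in>UNIV - {a, c}. sq (x - a) * sq (x - c)) = sq (b - a) * sq (b - c) + (\<Sum>x\<in>?A. sq (x - a) * sq (x - c))"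
      by simp
    thus ?thesis using sum_pair[OF q4 ac] by simp
  qed
  have s3: "(\<Sum>x\<in>?A. sq (x - b) * sq (x - c)) = -1 - sq (a - b) * sq (a - c)"
  proof -
    have "UNIV - {b, c} = insert a ?A" using ab ac by auto
    hence "(\<Sum>x\<in>UNIV - {b, c}. sq (x - b) * sq (x - c)) = sq (a - b) * sq (a - c) + (\<Sum>x\<in>?A. sq (x - b) * sq (x - c))"
      by simp
    thus ?thesis using sum_pair[OF q4 bc] by simp
  qed
  have cA: "int (card ?A) = int (card (UNIV::'a set)) - 3"
    using cardD[of "{a,b,c}"] ab ac bc by simp
  show ?thesis using c2 cu s1 s2 s3 cA by (simp add: algebra_simps)
qed

lemma opt_card: "card {W::'a::finite option. P W} = card {w. P (Some w)} + (if P None then 1 else 0)"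
proof -
  have e: "{W. P W} = Some ` {w. P (Some w)} \<union> {W::'a option. W = None \<and> P None}"
    by (rule set_eqI) (case_tac x, auto)
  have "card {W. P W} = card (Some ` {w. P (Some w)}) + card {W::'a option. W = None \<and> P None}"
  proof -
    have dj: "Some ` {w. P (Some w)} \<inter> {W::'a option. W = None \<and> P None} = {}" by blast
    have "card (Some ` {w. P (Some w)} \<union> {W::'a option. W = None \<and> P None}) = card (Some ` {w. P (Some w)}) + card {W::'a option. W = None \<and> P None}"
      by (rule card_Un_disjoint[OF _ _ dj]) auto
    thus ?thesis unfolding e .
  qed
  moreover have "card (Some ` {w. P (Some w)}) = card {w. P (Some w)}" by (rule card_image) auto
  moreover have "card {W::'a option. W = None \<and> P None} = (if P None then 1 else 0)" by auto
  ultimately show ?thesis by simp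
qed

lemma divle4: "(m::int) \<le> 4 * c \<Longrightarrow> m div 4 \<le> c" by presburger
lemma divle2: "(m::int) \<le> 2 * c \<Longrightarrow> m div 2 \<le> c" by presburger

lemma SPplus_None: "SPplus U U = None"
  by (cases U) (auto simp: SP_def)

lemma get1:
  assumes "length Y = 1" "length \<beta> = 1" "set \<beta> \<subseteq> {1, -1::int}"
  obtains a e where "Y = [a]" "\<beta> = [e]" "e = 1 \<or> e = -1"
proof -
  obtain a where "Y = [a]" using len1[OF assms(1)] by blast
  moreover obtain e where "\<beta> = [e]" using len1[OF assms(2)] by blast
  moreover have "e = 1 \<or> e = -1" using assms(3) \<open>\<beta> = [e]\<close> by auto
  ultimately show ?thesis using that by blast
qed

lemma get2:
  assumes "length Y = 2" "\<forall>i<2. \<forall>j<2. i \<noteq> j \<longrightarrow> G (Y!i) (Y!j) \<noteq> None"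
    "length \<beta> = 2" "set \<beta> \<subseteq> {1, -1::int}"
  obtains a b e1 e2 where "Y = [a, b]" "\<beta> = [e1, e2]" "G a b \<noteq> None"
    "e1 = 1 \<or> e1 = -1" "e2 = 1 \<or> e2 = -1"
proof -
  obtain a b where Y: "Y = [a, b]" using len2[OF assms(1)] by blast
  moreover obtain e1 e2 where b: "\<beta> = [e1, e2]" using len2[OF assms(3)] by blast
  moreover have "e1 = 1 \<or> e1 = -1" "e2 = 1 \<or> e2 = -1" using assms(4) b by auto
  moreover have "G a b \<noteq> None" using assms(2)[rule_format, of 0 1] Y by simp
  ultimately show ?thesis using that by blast
qed

lemma get3:
  assumes "length Y = 3" "\<forall>i<3. \<forall>j<3. i \<noteq> j \<longrightarrow> G (Y!i) (Y!j) \<noteq> None"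
    "length \<beta> = 3" "set \<beta> \<subseteq> {1, -1::int}"
  obtains a b c e1 e2 e3 where "Y = [a, b, c]" "\<beta> = [e1, e2, e3]" "G a b \<noteq> None" "G a c \<noteq> None" "G b c \<noteq> None"
    "e1 = 1 \<or> e1 = -1" "e2 = 1 \<or> e2 = -1" "e3 = 1 \<or> e3 = -1"
proof -
  obtain a b c where Y: "Y = [a, b, c]" using len3[OF assms(1)] by blast
  moreover obtain e1 e2 e3 where b: "\<beta> = [e1, e2, e3]" using len3[OF assms(3)] by blast
  moreover have "e1 = 1 \<or> e1 = -1" "e2 = 1 \<or> e2 = -1" "e3 = 1 \<or> e3 = -1" using assms(4) b by auto
  moreover have "G a b \<noteq> None" using assms(2)[rule_format, of 0 1] Y by simp
  moreover have "G a c \<noteq> None" using assms(2)[rule_format, of 0 2] Y by simp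
  moreover have "G b c \<noteq> None" using assms(2)[rule_format, of 1 2] Y by simp
  ultimately show ?thesis using that by blast
qed

lemma SP_ne: "SP a b \<noteq> None \<Longrightarrow> a \<noteq> b" by (auto simp: SP_def)
lemma SPplus_ne: "SPplus a b \<noteq> None \<Longrightarrow> a \<noteq> b" using SPplus_None by metis

lemma Tr1N: "card {W::'a::{finite,field} option. SPplus W None = Some e} = (if e = 1 then card (UNIV::'a set) else 0)"
  using opt_card[of "\<lambda>W::'a option. SPplus W None = Some e"] by (cases "e = 1") auto

lemma Tr1S: "card {W::'a::{finite,field} option. SPplus W (Some a) = Some e} = card {w. SP w a = Some e} + (if e = 1 then 1 else 0)"
  using opt_card[of "\<lambda>W::'a option. SPplus W (Some a) = Some e"] by (cases "e = 1") auto

lemma Tr2N1: "card {W::'a::{finite,field} option. SPplus W None = Some e1 \<and> SPplus W (Some b) = Some e2}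
   = (if e1 = 1 then card {w. SP w b = Some e2} else 0)"
  using opt_card[of "\<lambda>W::'a option. SPplus W None = Some e1 \<and> SPplus W (Some b) = Some e2"] by (cases "e1 = 1") auto

lemma Tr2N2: "card {W::'a::{finite,field} option. SPplus W (Some a) = Some e1 \<and> SPplus W None = Some e2}
   = (if e2 = 1 then card {w. SP w a = Some e1} else 0)"
  using opt_card[of "\<lambda>W::'a option. SPplus W (Some a) = Some e1 \<and> SPplus W None = Some e2"] by (cases "e2 = 1") auto

lemma Tr2S: "card {W::'a::{finite,field} option. SPplus W (Some a) = Some e1 \<and> SPplus W (Some b) = Some e2}
   = card {w. SP w a = Some e1 \<and> SP w b = Some e2} + (if e1 = 1 \<and> e2 = 1 then 1 else 0)"
  using opt_card[of "\<lambda>W::'a option. SPplus W (Some a) = Some e1 \<and> SPplus W (Some b) = Some e2"] by auto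

lemma Tr3N1: "card {W::'a::{finite,field} option. SPplus W None = Some e1 \<and> SPplus W (Some b) = Some e2 \<and> SPplus W (Some c) = Some e3}
   = (if e1 = 1 then card {w. SP w b = Some e2 \<and> SP w c = Some e3} else 0)"
  using opt_card[of "\<lambda>W::'a option. SPplus W None = Some e1 \<and> SPplus W (Some b) = Some e2 \<and> SPplus W (Some c) = Some e3"]
  by (cases "e1 = 1") auto

lemma Tr3N2: "card {W::'a::{finite,field} option. SPplus W (Some a) = Some e1 \<and> SPplus W None = Some e2 \<and> SPplus W (Some c) = Some e3}
   = (if e2 = 1 then card {w. SP w a = Some e1 \<and> SP w c = Some e3} else 0)"
  using opt_card[of "\<lambda>W::'a option. SPplus W (Some a) = Some e1 \<and> SPplus W None = Some e2 \<and> SPplus W (Some c) = Some e3"]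
  by (cases "e2 = 1") auto

lemma Tr3N3: "card {W::'a::{finite,field} option. SPplus W (Some a) = Some e1 \<and> SPplus W (Some b) = Some e2 \<and> SPplus W None = Some e3}
   = (if e3 = 1 then card {w. SP w a = Some e1 \<and> SP w b = Some e2} else 0)"
  using opt_card[of "\<lambda>W::'a option. SPplus W (Some a) = Some e1 \<and> SPplus W (Some b) = Some e2 \<and> SPplus W None = Some e3"]
  by (cases "e3 = 1") auto

lemma Tr3S: "card {W::'a::{finite,field} option. SPplus W (Some a) = Some e1 \<and> SPplus W (Some b) = Some e2 \<and> SPplus W (Some c) = Some e3}
   = card {w. SP w a = Some e1 \<and> SP w b = Some e2 \<and> SP w c = Some e3} + (if e1 = 1 \<and> e2 = 1 \<and> e3 = 1 then 1 else 0)"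
  using opt_card[of "\<lambda>W::'a option. SPplus W (Some a) = Some e1 \<and> SPplus W (Some b) = Some e2 \<and> SPplus W (Some c) = Some e3"]
  by auto

lemma ar2: "(e1::int) = 1 \<or> e1 = -1 \<Longrightarrow> e2 = 1 \<or> e2 = -1 \<Longrightarrow> d = 1 \<or> d = -1
   \<Longrightarrow> 4 * c = q - 2 - (e1 + e2) * d - e1 * e2 \<Longrightarrow> q - 5 \<le> 4 * c"
  by (elim disjE) auto

lemma N2lb:
  assumes q4: "card (UNIV::'a::{finite,field} set) mod 4 = 1" and ab: "(a::'a) \<noteq> b"
    and e1: "e1 = 1 \<or> e1 = -1" and e2: "e2 = 1 \<or> e2 = -1"
  shows "int (card (UNIV::'a set)) - 5 \<le> 4 * int (card {u. SP u a = Some e1 \<and> SP u b = Some e2})"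
  by (rule ar2[OF e1 e2 sq_pm N2[OF q4 ab e1 e2]])

lemma ar3: "(e1::int) = 1 \<or> e1 = -1 \<Longrightarrow> e2 = 1 \<or> e2 = -1 \<Longrightarrow> e3 = 1 \<or> e3 = -1
   \<Longrightarrow> x = 1 \<or> x = -1 \<Longrightarrow> y = 1 \<or> y = -1 \<Longrightarrow> z = 1 \<or> z = -1
   \<Longrightarrow> 4 * c = q - 3 - e1 * e2 * (1 + x * y) - e1 * e3 * (1 + z * y) - e2 * e3 * (1 + z * x)
   \<Longrightarrow> q - 9 \<le> 4 * c \<and> q - 5 \<le> 4 * (c + (if e1 = 1 \<and> e2 = 1 \<and> e3 = 1 then 1 else 0) + (if e1 = -1 \<and> e2 = -1 \<and> e3 = -1 then 1 else 0))"
  by (elim disjE) auto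

lemma N3lb:
  assumes q4: "card (UNIV::'a::{finite,field} set) mod 4 = 1"
    and ab: "(a::'a) \<noteq> b" and ac: "a \<noteq> c" and bc: "b \<noteq> c"
    and e1: "e1 = 1 \<or> e1 = -1" and e2: "e2 = 1 \<or> e2 = -1" and e3: "e3 = 1 \<or> e3 = -1"
  defines "T \<equiv> int (card {u. SP u a = Some e1 \<and> SP u b = Some e2 \<and> SP u c = Some e3})
            + int (card {u. SP u a = Some (-e1) \<and> SP u b = Some (-e2) \<and> SP u c = Some (-e3)})"
  shows "int (card (UNIV::'a set)) - 9 \<le> 4 * T \<and>
    int (card (UNIV::'a set)) - 5 \<le> 4 * (T + (if e1 = 1 \<and> e2 = 1 \<and> e3 = 1 then 1 else 0) + (if e1 = -1 \<and> e2 = -1 \<and> e3 = -1 then 1 else 0))"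
proof (rule ar3[OF e1 e2 e3 sq_pm sq_pm sq_pm])
  show "4 * T = int (card (UNIV::'a set)) - 3 - e1 * e2 * (1 + sq (a - c) * sq (b - c))
     - e1 * e3 * (1 + sq (a - b) * sq (b - c)) - e2 * e3 * (1 + sq (a - b) * sq (a - c))"
    using N3[OF q4 ab ac bc e1 e2 e3] sq_sym[OF q4, of c a] sq_sym[OF q4, of c b] sq_sym[OF q4, of b a]
    unfolding T_def by simp
qed

theorem mainTheorem10:
  fixes q :: int
  assumes "q = int (card (UNIV :: ('a::{finite, field}) set))"
    and "q mod 4 = 1"
  shows "propP (SP :: 'a \<Rightarrow> 'a \<Rightarrow> int option) 1 ((q - 1) div 2)
       \<and> propP (SP :: 'a \<Rightarrow> 'a \<Rightarrow> int option) 2 ((q - 5) div 4)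
       \<and> propP (Tr :: ('a option \<times> bool) \<Rightarrow> _ \<Rightarrow> _) 1 q
       \<and> propP (Tr :: ('a option \<times> bool) \<Rightarrow> _ \<Rightarrow> _) 2 ((q - 1) div 2)
       \<and> propP (Tr :: ('a option \<times> bool) \<Rightarrow> _ \<Rightarrow> _) 3 ((q - 5) div 4)
       \<and> propP (AT (SP :: 'a \<Rightarrow> 'a \<Rightarrow> int option)) 1 (q - 1)
       \<and> propP (AT (SP :: 'a \<Rightarrow> 'a \<Rightarrow> int option)) 2 ((q - 3) div 2)
       \<and> propP (AT (SP :: 'a \<Rightarrow> 'a \<Rightarrow> int option)) 3 (max 0 ((q - 9) div 4))"
proof -
  have "int (card (UNIV::'a set) mod 4) = 1" using assms by (simp add: zmod_int)
  hence q4: "card (UNIV::'a set) mod 4 = 1" by simp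
  note qd = assms(1)[symmetric]
  have P1: "propP (SP :: 'a \<Rightarrow> 'a \<Rightarrow> int option) 1 ((q - 1) div 2)"
  proof (rule propP_I)
    fix Y :: "'a list" and \<beta> :: "int list"
    assume A: "length Y = 1" "\<forall>i<1. \<forall>j<1. i \<noteq> j \<longrightarrow> SP (Y!i) (Y!j) \<noteq> None" "length \<beta> = 1" "set \<beta> \<subseteq> {1, -1}"
    obtain a e where Y: "Y = [a]" "\<beta> = [e]" "e = 1 \<or> e = -1" by (rule get1[OF A(1,3,4)])
    show "(q - 1) div 2 \<le> int (card (successors SP Y \<beta>))"
      unfolding Y succ1 by (rule divle2) (use N1[OF q4 Y(3), of a] qd in linarith)
  qed
  have P2: "propP (SP :: 'a \<Rightarrow> 'a \<Rightarrow> int option) 2 ((q - 5) div 4)"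
  proof (rule propP_I)
    fix Y :: "'a list" and \<beta> :: "int list"
    assume A: "length Y = 2" "\<forall>i<2. \<forall>j<2. i \<noteq> j \<longrightarrow> SP (Y!i) (Y!j) \<noteq> None" "length \<beta> = 2" "set \<beta> \<subseteq> {1, -1}"
    obtain a b e1 e2 where Y: "Y = [a, b]" "\<beta> = [e1, e2]" "SP a b \<noteq> None" "e1 = 1 \<or> e1 = -1" "e2 = 1 \<or> e2 = -1"
      by (rule get2[OF A])
    show "(q - 5) div 4 \<le> int (card (successors SP Y \<beta>))"
      unfolding Y(1,2) succ2 by (rule divle4) (use N2lb[OF q4 SP_ne[OF Y(3)] Y(4,5)] qd in linarith)
  qed
  have P3: "propP (Tr :: ('a option \<times> bool) \<Rightarrow> _ \<Rightarrow> _) 1 q"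
    unfolding Tr_def
  proof (rule propP_AT)
    fix Y :: "'a option list" and \<beta> :: "int list"
    assume A: "length Y = 1" "\<forall>i<1. \<forall>j<1. i \<noteq> j \<longrightarrow> SPplus (Y!i) (Y!j) \<noteq> None" "length \<beta> = 1" "set \<beta> \<subseteq> {1, -1}"
    obtain U e where Y: "Y = [U]" "\<beta> = [e]" "e = 1 \<or> e = -1" by (rule get1[OF A(1,3,4)])
    show "q \<le> int (card (successors SPplus Y \<beta>)) + int (card (successors SPplus Y (map uminus \<beta>)))"
    proof (cases U)
      case None
      show ?thesis using Y(3) unfolding Y(1,2) None by (elim disjE) (auto simp: succ1 Tr1N qd)
    next
      case (Some a)
      have n1: "2 * int (card {u. SP u a = Some e}) = q - 1" using N1[OF q4 Y(3), of a] qd by simp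
      have n2: "2 * int (card {u. SP u a = Some (-e)}) = q - 1" using N1[OF q4, of "-e" a] Y(3) qd by auto
      show ?thesis using Y(3) n1 n2 unfolding Y(1,2) Some by (elim disjE) (auto simp: succ1 Tr1S)
    qed
  qed
  have P4: "propP (Tr :: ('a option \<times> bool) \<Rightarrow> _ \<Rightarrow> _) 2 ((q - 1) div 2)"
    unfolding Tr_def
  proof (rule propP_AT)
    fix Y :: "'a option list" and \<beta> :: "int list"
    assume A: "length Y = 2" "\<forall>i<2. \<forall>j<2. i \<noteq> j \<longrightarrow> SPplus (Y!i) (Y!j) \<noteq> None" "length \<beta> = 2" "set \<beta> \<subseteq> {1, -1}"
    obtain U V e1 e2 where Y: "Y = [U, V]" "\<beta> = [e1, e2]" "SPplus U V \<noteq> None" "e1 = 1 \<or> e1 = -1" "e2 = 1 \<or> e2 = -1"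
      by (rule get2[OF A])
    have UV: "U \<noteq> V" using SPplus_ne[OF Y(3)] .
    show "(q - 1) div 2 \<le> int (card (successors SPplus Y \<beta>)) + int (card (successors SPplus Y (map uminus \<beta>)))"
      unfolding Y(1,2)
    proof (rule divle2, cases U; cases V)
      fix b assume "U = None" "V = Some b"
      have n1: "2 * int (card {u. SP u b = Some e2}) = q - 1" using N1[OF q4 Y(5), of b] qd by simp
      have n2: "2 * int (card {u. SP u b = Some (-e2)}) = q - 1" using N1[OF q4, of "-e2" b] Y(5) qd by auto
      show "q - 1 \<le> 2 * (int (card (successors SPplus [U, V] [e1, e2])) + int (card (successors SPplus [U, V] (map uminus [e1, e2]))))"
        using Y(4) n1 n2 unfolding \<open>U = None\<close> \<open>V = Some b\<close> by (elim disjE) (auto simp: succ2 Tr2N1)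
    next
      fix a assume "U = Some a" "V = None"
      have n1: "2 * int (card {u. SP u a = Some e1}) = q - 1" using N1[OF q4 Y(4), of a] qd by simp
      have n2: "2 * int (card {u. SP u a = Some (-e1)}) = q - 1" using N1[OF q4, of "-e1" a] Y(4) qd by auto
      show "q - 1 \<le> 2 * (int (card (successors SPplus [U, V] [e1, e2])) + int (card (successors SPplus [U, V] (map uminus [e1, e2]))))"
        using Y(5) n1 n2 unfolding \<open>U = Some a\<close> \<open>V = None\<close> by (elim disjE) (auto simp: succ2 Tr2N2)
    next
      fix a b assume "U = Some a" "V = Some b"
      hence ab: "a \<noteq> b" using UV by simp
      have n1: "4 * int (card {u. SP u a = Some e1 \<and> SP u b = Some e2}) = q - 2 - (e1 + e2) * sq (a - b) - e1 * e2"
        using N2[OF q4 ab Y(4,5)] qd by simp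
      have n2: "4 * int (card {u. SP u a = Some (-e1) \<and> SP u b = Some (-e2)}) = q - 2 - (-e1 + -e2) * sq (a - b) - (-e1) * (-e2)"
        using N2[OF q4 ab, of "-e1" "-e2"] Y(4,5) qd by auto
      show "q - 1 \<le> 2 * (int (card (successors SPplus [U, V] [e1, e2])) + int (card (successors SPplus [U, V] (map uminus [e1, e2]))))"
        using Y(4,5) n1 n2 unfolding \<open>U = Some a\<close> \<open>V = Some b\<close> by (elim disjE) (auto simp: succ2 Tr2S)
    next
      assume "U = None" "V = None" thus "q - 1 \<le> 2 * (int (card (successors SPplus [U, V] [e1, e2])) + int (card (successors SPplus [U, V] (map uminus [e1, e2]))))"
        using UV by simp
    qed
  qed
  have P5: "propP (Tr :: ('a option \<times> bool) \<Rightarrow> _ \<Rightarrow> _) 3 ((q - 5) div 4)"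
    unfolding Tr_def
  proof (rule propP_AT)
    fix Y :: "'a option list" and \<beta> :: "int list"
    assume A: "length Y = 3" "\<forall>i<3. \<forall>j<3. i \<noteq> j \<longrightarrow> SPplus (Y!i) (Y!j) \<noteq> None" "length \<beta> = 3" "set \<beta> \<subseteq> {1, -1}"
    obtain U V W e1 e2 e3 where Y: "Y = [U, V, W]" "\<beta> = [e1, e2, e3]" "SPplus U V \<noteq> None" "SPplus U W \<noteq> None" "SPplus V W \<noteq> None"
       "e1 = 1 \<or> e1 = -1" "e2 = 1 \<or> e2 = -1" "e3 = 1 \<or> e3 = -1"
      by (rule get3[OF A])
    have UV: "U \<noteq> V" "U \<noteq> W" "V \<noteq> W" using SPplus_ne Y(3,4,5) by auto
    let ?T = "int (card (successors SPplus Y \<beta>)) + int (card (successors SPplus Y (map uminus \<beta>)))"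
    have "q - 5 \<le> 4 * ?T"
    proof (cases U; cases V; cases W)
      fix b c assume "U = None" "V = Some b" "W = Some c"
      hence bc: "b \<noteq> c" using UV by simp
      have n1: "q - 5 \<le> 4 * int (card {u. SP u b = Some e2 \<and> SP u c = Some e3})" using N2lb[OF q4 bc Y(7,8)] qd by simp
      have n2: "q - 5 \<le> 4 * int (card {u. SP u b = Some (-e2) \<and> SP u c = Some (-e3)})" using N2lb[OF q4 bc, of "-e2" "-e3"] Y(7,8) qd by auto
      show ?thesis using Y(6) n1 n2 unfolding Y(1,2) \<open>U = None\<close> \<open>V = Some b\<close> \<open>W = Some c\<close> by (elim disjE) (auto simp: succ3 Tr3N1)
    next
      fix a c assume "U = Some a" "V = None" "W = Some c"
      hence ac: "a \<noteq> c" using UV by simp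
      have n1: "q - 5 \<le> 4 * int (card {u. SP u a = Some e1 \<and> SP u c = Some e3})" using N2lb[OF q4 ac Y(6,8)] qd by simp
      have n2: "q - 5 \<le> 4 * int (card {u. SP u a = Some (-e1) \<and> SP u c = Some (-e3)})" using N2lb[OF q4 ac, of "-e1" "-e3"] Y(6,8) qd by auto
      show ?thesis using Y(7) n1 n2 unfolding Y(1,2) \<open>U = Some a\<close> \<open>V = None\<close> \<open>W = Some c\<close> by (elim disjE) (auto simp: succ3 Tr3N2)
    next
      fix a b assume "U = Some a" "V = Some b" "W = None"
      hence ab: "a \<noteq> b" using UV by simp
      have n1: "q - 5 \<le> 4 * int (card {u. SP u a = Some e1 \<and> SP u b = Some e2})" using N2lb[OF q4 ab Y(6,7)] qd by simp
      have n2: "q - 5 \<le> 4 * int (card {u. SP u a = Some (-e1) \<and> SP u b = Some (-e2)})" using N2lb[OF q4 ab, of "-e1" "-e2"] Y(6,7) qd by auto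
      show ?thesis using Y(8) n1 n2 unfolding Y(1,2) \<open>U = Some a\<close> \<open>V = Some b\<close> \<open>W = None\<close> by (elim disjE) (auto simp: succ3 Tr3N3)
    next
      fix a b c assume "U = Some a" "V = Some b" "W = Some c"
      hence d: "a \<noteq> b" "a \<noteq> c" "b \<noteq> c" using UV by auto
      have n: "q - 5 \<le> 4 * (int (card {u. SP u a = Some e1 \<and> SP u b = Some e2 \<and> SP u c = Some e3})
            + int (card {u. SP u a = Some (-e1) \<and> SP u b = Some (-e2) \<and> SP u c = Some (-e3)})
            + (if e1 = 1 \<and> e2 = 1 \<and> e3 = 1 then 1 else 0) + (if e1 = -1 \<and> e2 = -1 \<and> e3 = -1 then 1 else 0))"
        using N3lb[OF q4 d Y(6,7,8)] qd by simp
      show ?thesis using n unfolding Y(1,2) \<open>U = Some a\<close> \<open>V = Some b\<close> \<open>W = Some c\<close>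
        by (auto simp: succ3 Tr3S)
    qed (use UV in \<open>auto simp: Y(1,2)\<close>)
    thus "(q - 5) div 4 \<le> ?T" by (rule divle4)
  qed
  have P6: "propP (AT (SP :: 'a \<Rightarrow> 'a \<Rightarrow> int option)) 1 (q - 1)"
  proof (rule propP_AT)
    fix Y :: "'a list" and \<beta> :: "int list"
    assume A: "length Y = 1" "\<forall>i<1. \<forall>j<1. i \<noteq> j \<longrightarrow> SP (Y!i) (Y!j) \<noteq> None" "length \<beta> = 1" "set \<beta> \<subseteq> {1, -1}"
    obtain a e where Y: "Y = [a]" "\<beta> = [e]" "e = 1 \<or> e = -1" by (rule get1[OF A(1,3,4)])
    have n1: "2 * int (card {u. SP u a = Some e}) = q - 1" using N1[OF q4 Y(3), of a] qd by simp
    have n2: "2 * int (card {u. SP u a = Some (-e)}) = q - 1" using N1[OF q4, of "-e" a] Y(3) qd by auto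
    show "q - 1 \<le> int (card (successors SP Y \<beta>)) + int (card (successors SP Y (map uminus \<beta>)))"
      using n1 n2 unfolding Y(1,2) by (simp add: succ1)
  qed
  have P7: "propP (AT (SP :: 'a \<Rightarrow> 'a \<Rightarrow> int option)) 2 ((q - 3) div 2)"
  proof (rule propP_AT)
    fix Y :: "'a list" and \<beta> :: "int list"
    assume A: "length Y = 2" "\<forall>i<2. \<forall>j<2. i \<noteq> j \<longrightarrow> SP (Y!i) (Y!j) \<noteq> None" "length \<beta> = 2" "set \<beta> \<subseteq> {1, -1}"
    obtain a b e1 e2 where Y: "Y = [a, b]" "\<beta> = [e1, e2]" "SP a b \<noteq> None" "e1 = 1 \<or> e1 = -1" "e2 = 1 \<or> e2 = -1"
      by (rule get2[OF A])
    have ab: "a \<noteq> b" using SP_ne[OF Y(3)] .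
    have n1: "4 * int (card {u. SP u a = Some e1 \<and> SP u b = Some e2}) = q - 2 - (e1 + e2) * sq (a - b) - e1 * e2"
      using N2[OF q4 ab Y(4,5)] qd by simp
    have n2: "4 * int (card {u. SP u a = Some (-e1) \<and> SP u b = Some (-e2)}) = q - 2 - (-e1 + -e2) * sq (a - b) - (-e1) * (-e2)"
      using N2[OF q4 ab, of "-e1" "-e2"] Y(4,5) qd by auto
    show "(q - 3) div 2 \<le> int (card (successors SP Y \<beta>)) + int (card (successors SP Y (map uminus \<beta>)))"
      unfolding Y(1,2) by (rule divle2) (use Y(4,5) n1 n2 in \<open>elim disjE; auto simp: succ2\<close>)
  qed
  have P8: "propP (AT (SP :: 'a \<Rightarrow> 'a \<Rightarrow> int option)) 3 (max 0 ((q - 9) div 4))"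
  proof (rule propP_AT)
    fix Y :: "'a list" and \<beta> :: "int list"
    assume A: "length Y = 3" "\<forall>i<3. \<forall>j<3. i \<noteq> j \<longrightarrow> SP (Y!i) (Y!j) \<noteq> None" "length \<beta> = 3" "set \<beta> \<subseteq> {1, -1}"
    obtain a b c e1 e2 e3 where Y: "Y = [a, b, c]" "\<beta> = [e1, e2, e3]" "SP a b \<noteq> None" "SP a c \<noteq> None" "SP b c \<noteq> None"
       "e1 = 1 \<or> e1 = -1" "e2 = 1 \<or> e2 = -1" "e3 = 1 \<or> e3 = -1"
      by (rule get3[OF A])
    have d: "a \<noteq> b" "a \<noteq> c" "b \<noteq> c" using SP_ne Y(3,4,5) by auto
    have n: "q - 9 \<le> 4 * (int (card {u. SP u a = Some e1 \<and> SP u b = Some e2 \<and> SP u c = Some e3})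
            + int (card {u. SP u a = Some (-e1) \<and> SP u b = Some (-e2) \<and> SP u c = Some (-e3)}))"
      using N3lb[OF q4 d Y(6,7,8)] qd by simp
    show "max 0 ((q - 9) div 4) \<le> int (card (successors SP Y \<beta>)) + int (card (successors SP Y (map uminus \<beta>)))"
      unfolding Y(1,2) using divle4[OF n] by (simp add: succ3)
  qed
  show ?thesis using P1 P2 P3 P4 P5 P6 P7 P8 by blast
qed

end
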